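(* Let $M$ be a monoid and $M_0,M_1,M_2$ submonoids of $M$ with $M_0\subseteq M_1\cap M_2$, such that $M$ is the free amalgamated product $M=M_1\ast_{M_0}M_2$ (with respect to the inclusions of $M_0$ into $M_1$ and $M_2$). Regard $\mathbb{Z}$ as the trivial right $M_j$-module ($n\cdot a=n$ for $a\in M_j$) and $\mathbb{Z}$ as the trivial right $M$-module. Define right $M$-module homomorphisms $i:\mathbb{Z}\otimes_{M_0}\mathbb{Z}M\to \mathbb{Z}\otimes_{M_1}\mathbb{Z}M\oplus\mathbb{Z}\otimes_{M_2}\mathbb{Z}M$ by $i(1\otimes_{M_0}w)=1\otimes_{M_1}w+1\otimes_{M_2}w$, and $p:\mathbb{Z}\otimes_{M_1}\mathbb{Z}M\oplus\mathbb{Z}\otimes_{M_2}\mathbb{Z}M\to\mathbb{Z}$ by $p(1\otimes_{M_1}v)=1$ and $p(1\otimes_{M_2}u)=-1$ for $u,v,w\in M$ (extended linearly). Then the sequence of right $M$-modules $$0\to \mathbb{Z}\otimes_{M_0}\mathbb{Z}M\xrightarrow{\ i\ }\mathbb{Z}\otimes_{M_1}\mathbb{Z}M\oplus\mathbb{Z}\otimes_{M_2}\mathbb{Z}M\xrightarrow{\ p\ }\mathbb{Z}\to 0$$ is exact.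
   Context: For monoids $M_1,M_2$ containing a common submonoid $M_0$ (identified via embeddings), the free amalgamated product $M_1\ast_{M_0}M_2$ is the quotient of the monoid free product $M_1\ast M_2$ by the least congruence identifying the image of each $u\in M_0$ in $M_1$ with its image in $M_2$. Here $M=M_1\ast_{M_0}M_2$ means that the natural map from this amalgamated product to $M$ induced by the inclusions is an isomorphism. $\otimes_{M_j}$ denotes tensor product over $\mathbb{Z}M_j$, with $\mathbb{Z}M$ a left $\mathbb{Z}M_j$-module by left multiplication; the result is a right $M$-module via right multiplication on $\mathbb{Z}M$. *)

theory Defs
  imports Main "HOL-Library.Poly_Mapping"
begin

definition submonoid :: "'a::monoid_mult set \<Rightarrow> bool" where
  "submonoid S \<longleftrightarrow> 1 \<in> S \<and> (\<forall>x\<in>S. \<forall>y\<in>S. x * y \<in> S)"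

(* Words in the free monoid on the disjoint union of M1 (Inl) and M2 (Inr). *)
definition letters :: "'a set \<Rightarrow> 'a set \<Rightarrow> ('a + 'a) set" where
  "letters M1 M2 = Inl ` M1 \<union> Inr ` M2"

definition eval_word :: "('a::monoid_mult + 'a) list \<Rightarrow> 'a" where
  "eval_word w = foldr (\<lambda>l acc. (case l of Inl x \<Rightarrow> x | Inr x \<Rightarrow> x) * acc) w 1"

inductive amal_gen :: "'a::monoid_mult set \<Rightarrow> 'a set \<Rightarrow> 'a set \<Rightarrow> ('a + 'a) list \<Rightarrow> ('a + 'a) list \<Rightarrow> bool"
  for M0 M1 M2 where
  mult1: "x \<in> M1 \<Longrightarrow> y \<in> M1 \<Longrightarrow> amal_gen M0 M1 M2 [Inl x, Inl y] [Inl (x * y)]"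
| one1: "amal_gen M0 M1 M2 [Inl 1] []"
| mult2: "x \<in> M2 \<Longrightarrow> y \<in> M2 \<Longrightarrow> amal_gen M0 M1 M2 [Inr x, Inr y] [Inr (x * y)]"
| one2: "amal_gen M0 M1 M2 [Inr 1] []"
| amal: "u \<in> M0 \<Longrightarrow> amal_gen M0 M1 M2 [Inl u] [Inr u]"

inductive amal_step :: "'a::monoid_mult set \<Rightarrow> 'a set \<Rightarrow> 'a set \<Rightarrow> ('a + 'a) list \<Rightarrow> ('a + 'a) list \<Rightarrow> bool"
  for M0 M1 M2 where
  "amal_gen M0 M1 M2 l r \<Longrightarrow> u \<in> lists (letters M1 M2) \<Longrightarrow> v \<in> lists (letters M1 M2)
    \<Longrightarrow> amal_step M0 M1 M2 (u @ l @ v) (u @ r @ v)"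

definition amal_cong :: "'a::monoid_mult set \<Rightarrow> 'a set \<Rightarrow> 'a set \<Rightarrow> ('a + 'a) list \<Rightarrow> ('a + 'a) list \<Rightarrow> bool" where
  "amal_cong M0 M1 M2 = equivclp (amal_step M0 M1 M2)"

(* The whole monoid (the type 'a) is the free amalgamated product: the natural
  map from (words modulo the congruence) to 'a, induced by the inclusions, is bijective. *)
definition is_free_amalgam :: "'a::monoid_mult set \<Rightarrow> 'a set \<Rightarrow> 'a set \<Rightarrow> bool" where
  "is_free_amalgam M0 M1 M2 \<longleftrightarrow>
     (\<forall>m. \<exists>w \<in> lists (letters M1 M2). eval_word w = m) \<and>
     (\<forall>w \<in> lists (letters M1 M2). \<forall>w' \<in> lists (letters M1 M2).
        eval_word w = eval_word w' \<longrightarrow> amal_cong M0 M1 M2 w w')"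

(* ZM is the type 'a =>0 int. Z (x)_{Mj} ZM (Z trivial) is ZM modulo the subgroup
  generated by the elements 1(a w) - 1w, i.e. single (a*w) 1 - single w 1, a  Mj. *)
inductive_set aug_ker :: "'a::monoid_mult set \<Rightarrow> ('a \<Rightarrow>\<^sub>0 int) set" for Mj where
  zero: "0 \<in> aug_ker Mj"
| gen: "a \<in> Mj \<Longrightarrow> Poly_Mapping.single (a * w) 1 - Poly_Mapping.single w 1 \<in> aug_ker Mj"
| add: "x \<in> aug_ker Mj \<Longrightarrow> y \<in> aug_ker Mj \<Longrightarrow> x + y \<in> aug_ker Mj"
| neg: "x \<in> aug_ker Mj \<Longrightarrow> - x \<in> aug_ker Mj"

definition tcoset :: "'a::monoid_mult set \<Rightarrow> ('a \<Rightarrow>\<^sub>0 int) \<Rightarrow> ('a \<Rightarrow>\<^sub>0 int) set" where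
  "tcoset Mj x = {y. x - y \<in> aug_ker Mj}"

(* Carrier of Z (x)_{Mj} ZM; the class tcoset Mj (single w 1) is 1 (x)_{Mj} w. *)
definition tens :: "'a::monoid_mult set \<Rightarrow> ('a \<Rightarrow>\<^sub>0 int) set set" where
  "tens Mj = range (tcoset Mj)"

(* i(1 (x)_{M0} w) = (1 (x)_{M1} w, 1 (x)_{M2} w), extended linearly: a class c is sent to
  the classes of its representatives. *)
definition tens_i :: "'a::monoid_mult set \<Rightarrow> 'a set \<Rightarrow> ('a \<Rightarrow>\<^sub>0 int) set \<Rightarrow>
    ('a \<Rightarrow>\<^sub>0 int) set \<times> ('a \<Rightarrow>\<^sub>0 int) set" where
  "tens_i M1 M2 c = ({y. \<exists>x\<in>c. x - y \<in> aug_ker M1}, {y. \<exists>x\<in>c. x - y \<in> aug_ker M2})"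

definition aug :: "('a \<Rightarrow>\<^sub>0 int) \<Rightarrow> int" where
  "aug x = (\<Sum>w\<in>Poly_Mapping.keys x. Poly_Mapping.lookup x w)"

(* p(1 (x)_{M1} v) = 1, p(1 (x)_{M2} u) = -1, extended linearly. *)
definition tens_p :: "('a \<Rightarrow>\<^sub>0 int) set \<times> ('a \<Rightarrow>\<^sub>0 int) set \<Rightarrow> int" where
  "tens_p b = (THE n. \<exists>x\<in>fst b. \<exists>y\<in>snd b. n = aug x - aug y)"

end

theory Submission
  imports Defs
begin



definition pr :: "('a \<Rightarrow>\<^sub>0 int) \<Rightarrow> ('a \<Rightarrow> int) \<Rightarrow> int" where
  "pr x h = (\<Sum>w\<in>Poly_Mapping.keys x. Poly_Mapping.lookup x w * h w)"

lemma pr_superset: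
  assumes "finite S" "Poly_Mapping.keys x \<subseteq> S"
  shows "pr x h = (\<Sum>w\<in>S. Poly_Mapping.lookup x w * h w)"
  unfolding pr_def using assms
  by (intro sum.mono_neutral_left) (auto simp: in_keys_iff)

lemma pr_add: "pr (x + y) h = pr x h + pr y h"
proof -
  let ?S = "Poly_Mapping.keys x \<union> Poly_Mapping.keys y"
  have "Poly_Mapping.keys (x + y) \<subseteq> ?S" by (auto simp: in_keys_iff lookup_add)
  then have "pr (x+y) h = (\<Sum>w\<in>?S. Poly_Mapping.lookup (x+y) w * h w)" by (intro pr_superset) auto
  also have "\<dots> = (\<Sum>w\<in>?S. Poly_Mapping.lookup x w * h w) + (\<Sum>w\<in>?S. Poly_Mapping.lookup y w * h w)"
    by (simp add: lookup_add distrib_right sum.distrib)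
  also have "\<dots> = pr x h + pr y h"
    by (subst (1 2) pr_superset[of ?S]) auto
  finally show ?thesis .
qed

lemma pr_uminus: "pr (- x) h = - pr x h"
  unfolding pr_def by (simp add: sum_negf)

lemma pr_diff: "pr (x - y) h = pr x h - pr y h"
  using pr_add[of x "-y" h] pr_uminus[of y h] by simp

lemma pr_zero: "pr 0 h = 0" unfolding pr_def by simp

lemma pr_single: "pr (Poly_Mapping.single k c) h = c * h k"
  unfolding pr_def by (cases "c = 0") auto

lemma aug_pr: "aug x = pr x (\<lambda>_. 1)"
  unfolding aug_def pr_def by simp

lemma pr_ker:
  assumes "x \<in> aug_ker Mj" "\<And>a w. a \<in> Mj \<Longrightarrow> h (a * w) = h w"
  shows "pr x h = 0"
  using assms(1) by induct (auto simp: pr_zero pr_add pr_uminus pr_diff pr_single assms(2))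

lemma aug_ker_aug: "x \<in> aug_ker Mj \<Longrightarrow> aug x = 0"
  unfolding aug_pr by (rule pr_ker) auto

lemma aug_ker_diff: "x \<in> aug_ker Mj \<Longrightarrow> y \<in> aug_ker Mj \<Longrightarrow> x - y \<in> aug_ker Mj"
  using aug_ker.add[OF _ aug_ker.neg] by (metis diff_conv_add_uminus)

lemma aug_ker_mono: assumes "M0 \<subseteq> M1" "x \<in> aug_ker M0" shows "x \<in> aug_ker M1"
  using assms(2) by induct (use assms(1) in \<open>auto intro: aug_ker.intros\<close>)

lemma decomp: "x = (\<Sum>w\<in>Poly_Mapping.keys x. Poly_Mapping.single w (Poly_Mapping.lookup x w))"
proof (rule poly_mapping_eqI)
  fix k
  have "(\<Sum>w\<in>Poly_Mapping.keys x. Poly_Mapping.lookup (Poly_Mapping.single w (Poly_Mapping.lookup x w)) k) = (\<Sum>w\<in>Poly_Mapping.keys x. if w = k then Poly_Mapping.lookup x k else 0)"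
    by (intro sum.cong) (auto simp: lookup_single)
  also have "\<dots> = Poly_Mapping.lookup x k" by (auto simp: in_keys_iff)
  finally show "Poly_Mapping.lookup x k = Poly_Mapping.lookup (\<Sum>w\<in>Poly_Mapping.keys x. Poly_Mapping.single w (Poly_Mapping.lookup x w)) k"
    by (simp add: lookup_sum)
qed

lemma aug_ker_sum: "finite S \<Longrightarrow> (\<And>i. i \<in> S \<Longrightarrow> f i \<in> aug_ker Mj) \<Longrightarrow> sum f S \<in> aug_ker Mj"
  by (induct S rule: finite_induct) (auto intro: aug_ker.intros)

lemma aug_ker_scale_nat:
  assumes "Poly_Mapping.single w 1 - Poly_Mapping.single w' 1 \<in> aug_ker Mj"
  shows "Poly_Mapping.single w (int n) - Poly_Mapping.single w' (int n) \<in> aug_ker Mj"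
proof (induct n)
  case 0 then show ?case by (simp add: aug_ker.zero)
  case (Suc n)
  have "Poly_Mapping.single w (int (Suc n)) - Poly_Mapping.single w' (int (Suc n)) =
    (Poly_Mapping.single w (int n) - Poly_Mapping.single w' (int n)) + (Poly_Mapping.single w 1 - Poly_Mapping.single w' 1)"
    unfolding of_nat_Suc single_add by (simp add: algebra_simps)
  then show ?case using Suc assms by (simp add: aug_ker.add)
qed

lemma aug_ker_scale:
  assumes "Poly_Mapping.single w 1 - Poly_Mapping.single w' 1 \<in> aug_ker Mj"
  shows "Poly_Mapping.single w c - Poly_Mapping.single w' c \<in> aug_ker Mj"
proof (cases "c \<ge> 0")
  case True then show ?thesis using aug_ker_scale_nat[OF assms, of "nat c"] by simp
next
  case False
  have "Poly_Mapping.single w c - Poly_Mapping.single w' c = - (Poly_Mapping.single w (int (nat (-c))) - Poly_Mapping.single w' (int (nat (-c))))"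
    using False by (simp add: single_uminus)
  then show ?thesis using aug_ker.neg[OF aug_ker_scale_nat[OF assms, of "nat (-c)"]] by simp
qed


lemma eval_word_Cons: "eval_word (c # u) = (case c of Inl x \<Rightarrow> x | Inr x \<Rightarrow> x) * eval_word u"
  unfolding eval_word_def by simp

lemma eval_word_append: "eval_word (u @ v) = eval_word u * eval_word v"
  by (induct u) (auto simp: eval_word_Cons mult.assoc, simp add: eval_word_def)


lemma pr_fun_diff: "pr x (\<lambda>w. g w - h w) = pr x g - pr x h"
  unfolding pr_def by (simp add: right_diff_distrib sum_subtractf)

lemma class_lemma:
  assumes H: "\<And>f. (\<And>a w. a \<in> M0 \<Longrightarrow> f (a*w) = f w) \<Longrightarrow> pr x f = 0"
  shows "x \<in> aug_ker M0"
proof -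
  define R where "R w w' \<longleftrightarrow> Poly_Mapping.single w (1::int) - Poly_Mapping.single w' 1 \<in> aug_ker M0" for w w'
  have Rrefl: "R w w" for w by (simp add: R_def aug_ker.zero)
  have Rsym: "R w' w" if "R w w'" for w w'
  proof -
    have "- (Poly_Mapping.single w (1::int) - Poly_Mapping.single w' 1) \<in> aug_ker M0"
      using that unfolding R_def by (rule aug_ker.neg)
    then show ?thesis unfolding R_def by simp
  qed
  have Rtrans: "R w w''" if "R w w'" "R w' w''" for w w' w''
  proof -
    have "(Poly_Mapping.single w (1::int) - Poly_Mapping.single w' 1) + (Poly_Mapping.single w' 1 - Poly_Mapping.single w'' 1) \<in> aug_ker M0"
      using that unfolding R_def by (rule aug_ker.add)
    then show ?thesis unfolding R_def by simp
  qed
  define r where "r w = (SOME c. c \<in> {c. R c w})" for w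
  have rR: "R (r w) w" for w
  proof -
    have "w \<in> {c. R c w}" using Rrefl by simp
    from someI[of "\<lambda>c. c \<in> {c. R c w}", OF this] show ?thesis unfolding r_def by simp
  qed
  have rcong: "r w = r w'" if "R w w'" for w w'
  proof -
    have "{c. R c w} = {c. R c w'}"
    proof (rule Collect_cong)
      fix c show "R c w = R c w'" using Rtrans[of c w w'] Rtrans[of c w' w] Rsym[OF that] that by blast
    qed
    then show ?thesis unfolding r_def by simp
  qed
  have rgen: "r (a*w) = r w" if "a \<in> M0" for a w
    by (rule rcong) (unfold R_def, rule aug_ker.gen[OF that])
  define y where "y = (\<Sum>w\<in>Poly_Mapping.keys x. Poly_Mapping.single (r w) (Poly_Mapping.lookup x w))"
  have "x - y = (\<Sum>w\<in>Poly_Mapping.keys x. Poly_Mapping.single w (Poly_Mapping.lookup x w) - Poly_Mapping.single (r w) (Poly_Mapping.lookup x w))"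
  proof -
    have D: "(\<Sum>w\<in>Poly_Mapping.keys x. Poly_Mapping.single w (Poly_Mapping.lookup x w)) = x" by (rule decomp[symmetric])
    have "(\<Sum>w\<in>Poly_Mapping.keys x. Poly_Mapping.single w (Poly_Mapping.lookup x w) - Poly_Mapping.single (r w) (Poly_Mapping.lookup x w))
      = (\<Sum>w\<in>Poly_Mapping.keys x. Poly_Mapping.single w (Poly_Mapping.lookup x w)) - (\<Sum>w\<in>Poly_Mapping.keys x. Poly_Mapping.single (r w) (Poly_Mapping.lookup x w))"
      by (rule sum_subtractf)
    also have "\<dots> = x - y" using D y_def[symmetric] by (rule arg_cong2[where f = minus])
    finally show ?thesis by (rule sym)
  qed
  also have "\<dots> \<in> aug_ker M0"
  proof (rule aug_ker_sum)
    fix i show "Poly_Mapping.single i (Poly_Mapping.lookup x i) - Poly_Mapping.single (r i) (Poly_Mapping.lookup x i) \<in> aug_ker M0"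
      by (rule aug_ker_scale) (use Rsym[OF rR[of i]] in \<open>unfold R_def\<close>)
  qed (simp)
  finally have xy: "x - y \<in> aug_ker M0" .
  have "y = 0"
  proof (rule poly_mapping_eqI)
    fix c
    have "Poly_Mapping.lookup y c = (\<Sum>w\<in>Poly_Mapping.keys x. Poly_Mapping.lookup x w * (if r w = c then 1 else 0))"
      unfolding y_def lookup_sum by (intro sum.cong) (auto simp: lookup_single)
    also have "\<dots> = pr x (\<lambda>w. if r w = c then 1 else 0)" unfolding pr_def by simp
    also have "\<dots> = 0" by (rule H) (simp add: rgen)
    finally show "Poly_Mapping.lookup y c = Poly_Mapping.lookup 0 c" by simp
  qed
  then show ?thesis using xy by simp
qed

fun gam :: "('a::monoid_mult \<Rightarrow> int) \<Rightarrow> ('a + 'a) list \<Rightarrow> int" where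
  "gam f [] = 0"
| "gam f (Inl a # u) = gam f u"
| "gam f (Inr b # u) = f (b * eval_word u) - f (eval_word u) + gam f u"

lemma gam_prefix:
  assumes "gam f w = gam f w'" "eval_word w = eval_word w'"
  shows "gam f (u @ w) = gam f (u @ w') \<and> eval_word (u @ w) = eval_word (u @ w')"
proof (induct u)
  case Nil then show ?case using assms by simp
next
  case (Cons c u) then show ?case by (cases c) (simp_all add: eval_word_Cons)
qed

lemma gam_step:
  assumes finv: "\<And>a w. a \<in> M0 \<Longrightarrow> f (a*w) = f w" and st: "amal_step M0 M1 M2 x y"
  shows "gam f x = gam f y"
  using st
proof cases
  case (1 l r u v)
  have "gam f (l @ v) = gam f (r @ v) \<and> eval_word (l @ v) = eval_word (r @ v)"
    using 1(3) by cases (simp_all add: eval_word_Cons mult.assoc finv)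
  then show ?thesis using gam_prefix[of f "l @ v" "r @ v" u] 1 by simp
qed

lemma gam_cong:
  assumes finv: "\<And>a w. a \<in> M0 \<Longrightarrow> f (a*w) = f w" and c: "amal_cong M0 M1 M2 x y"
  shows "gam f x = gam f y"
  using c unfolding amal_cong_def
proof (induct rule: equivclp_induct)
  case base then show ?case by simp
next
  case (step y z)
  from step(2) have "gam f y = gam f z"
  proof (elim disjE)
    assume "amal_step M0 M1 M2 y z" from gam_step[OF finv this] show ?thesis .
  next
    assume "amal_step M0 M1 M2 z y" from gam_step[OF finv this] show ?thesis by simp
  qed
  then show ?case using step(3) by simp
qed

lemma split_inv:
  fixes f :: "'a::monoid_mult \<Rightarrow> int"
  assumes amal: "is_free_amalgam M0 M1 M2" and finv: "\<And>a w. a \<in> M0 \<Longrightarrow> f (a*w) = f w"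
  shows "\<exists>g. (\<forall>a\<in>M1. \<forall>w. g (a*w) = g w) \<and> (\<forall>b\<in>M2. \<forall>w. g (b*w) - f (b*w) = g w - f w)"
proof -
  define wd where "wd m = (SOME w. w \<in> lists (letters M1 M2) \<and> eval_word w = m)" for m
  have wd: "wd m \<in> lists (letters M1 M2) \<and> eval_word (wd m) = m" for m
    using someI_ex[of "\<lambda>w. w \<in> lists (letters M1 M2) \<and> eval_word w = m"] amal
    unfolding wd_def is_free_amalgam_def by blast
  define g where "g m = gam f (wd m)" for m
  have key: "g (eval_word w) = gam f w" if "w \<in> lists (letters M1 M2)" for w
  proof -
    have "amal_cong M0 M1 M2 (wd (eval_word w)) w"
      using amal wd[of "eval_word w"] that unfolding is_free_amalgam_def by blast
    from gam_cong[OF finv this] show ?thesis unfolding g_def .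
  qed
  have "g (a*w) = g w" if "a \<in> M1" for a w
  proof -
    have "Inl a # wd w \<in> lists (letters M1 M2)" using wd that by (auto simp: letters_def)
    from key[OF this] show ?thesis using wd[of w] key[of "wd w"] by (simp add: eval_word_Cons)
  qed
  moreover have "g (b*w) - f (b*w) = g w - f w" if "b \<in> M2" for b w
  proof -
    have "Inr b # wd w \<in> lists (letters M1 M2)" using wd that by (auto simp: letters_def)
    from key[OF this] show ?thesis using wd[of w] key[of "wd w"] by (simp add: eval_word_Cons)
  qed
  ultimately show ?thesis by blast
qed

lemma ker_inter:
  assumes amal: "is_free_amalgam M0 M1 M2" and x1: "x \<in> aug_ker M1" and x2: "x \<in> aug_ker M2"
  shows "x \<in> aug_ker M0"
proof (rule class_lemma)
  fix f :: "'a \<Rightarrow> int" assume finv: "\<And>a w. a \<in> M0 \<Longrightarrow> f (a*w) = f w"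
  obtain g where g1: "\<forall>a\<in>M1. \<forall>w. g (a*w) = g w" and g2: "\<forall>b\<in>M2. \<forall>w. g (b*w) - f (b*w) = g w - f w"
    using split_inv[OF amal finv] by blast
  have "pr x g = 0" using pr_ker[OF x1] g1 by blast
  moreover have "pr x (\<lambda>w. g w - f w) = 0" using pr_ker[OF x2, of "\<lambda>w. g w - f w"] g2 by blast
  ultimately show "pr x f = 0" by (simp add: pr_fun_diff)
qed

definition sumK :: "'a::monoid_mult set \<Rightarrow> 'a set \<Rightarrow> ('a \<Rightarrow>\<^sub>0 int) set" where
  "sumK M1 M2 = {k1 + k2 | k1 k2. k1 \<in> aug_ker M1 \<and> k2 \<in> aug_ker M2}"

lemma sumK_sum: "finite S \<Longrightarrow> (\<And>i. i \<in> S \<Longrightarrow> f i \<in> sumK M1 M2) \<Longrightarrow> sum f S \<in> sumK M1 M2"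
proof (induct S rule: finite_induct)
  case empty then show ?case unfolding sumK_def using aug_ker.zero by force
next
  case (insert i S)
  then obtain a b c d where "f i = a + b" "sum f S = c + d" "a \<in> aug_ker M1" "c \<in> aug_ker M1"
    "b \<in> aug_ker M2" "d \<in> aug_ker M2" unfolding sumK_def by force
  note abcd = this
  have "sum f (insert i S) = (a + c) + (b + d)" using abcd insert(1,2) by (simp add: algebra_simps)
  moreover have "a + c \<in> aug_ker M1" "b + d \<in> aug_ker M2" using abcd by (simp_all add: aug_ker.add)
  ultimately show ?case unfolding sumK_def by blast
qed

lemma conn_word:
  assumes "u \<in> lists (letters M1 M2)"
  shows "Poly_Mapping.single (eval_word u) c - Poly_Mapping.single 1 c \<in> sumK M1 M2"
  using assms
proof (induct u)
  case Nil then show ?case unfolding sumK_def using aug_ker.zero by (force simp: eval_word_def)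
next
  case (Cons l u)
  then obtain k1 k2 where k: "Poly_Mapping.single (eval_word u) c - Poly_Mapping.single 1 c = k1 + k2"
    "k1 \<in> aug_ker M1" "k2 \<in> aug_ker M2" unfolding sumK_def by auto
  show ?case
  proof (cases l)
    case (Inl a)
    then have a: "a \<in> M1" using Cons by (auto simp: letters_def)
    have d: "Poly_Mapping.single (a * eval_word u) c - Poly_Mapping.single (eval_word u) c \<in> aug_ker M1"
      by (rule aug_ker_scale) (rule aug_ker.gen[OF a])
    have "Poly_Mapping.single (eval_word (l # u)) c - Poly_Mapping.single 1 c =
      (Poly_Mapping.single (a * eval_word u) c - Poly_Mapping.single (eval_word u) c + k1) + k2"
      using k(1) Inl by (simp add: eval_word_Cons algebra_simps)
    then show ?thesis unfolding sumK_def using d k by (blast intro: aug_ker.add)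
  next
    case (Inr a)
    then have a: "a \<in> M2" using Cons by (auto simp: letters_def)
    have d: "Poly_Mapping.single (a * eval_word u) c - Poly_Mapping.single (eval_word u) c \<in> aug_ker M2"
      by (rule aug_ker_scale) (rule aug_ker.gen[OF a])
    have "Poly_Mapping.single (eval_word (l # u)) c - Poly_Mapping.single 1 c =
      k1 + (Poly_Mapping.single (a * eval_word u) c - Poly_Mapping.single (eval_word u) c + k2)"
      using k(1) Inr by (simp add: eval_word_Cons algebra_simps)
    then show ?thesis unfolding sumK_def using d k by (blast intro: aug_ker.add)
  qed
qed

lemma conn:
  assumes amal: "is_free_amalgam M0 M1 M2"
  shows "x - Poly_Mapping.single 1 (aug x) \<in> sumK M1 M2"
proof -
  have s1: "Poly_Mapping.single w c - Poly_Mapping.single 1 c \<in> sumK M1 M2" for w c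
  proof -
    obtain u where "u \<in> lists (letters M1 M2)" "eval_word u = w" using amal unfolding is_free_amalgam_def by blast
    then show ?thesis using conn_word by blast
  qed
  have e: "Poly_Mapping.single 1 (aug x) = (\<Sum>w\<in>Poly_Mapping.keys x. Poly_Mapping.single 1 (Poly_Mapping.lookup x w))"
  proof (rule poly_mapping_eqI)
    fix k
    show "Poly_Mapping.lookup (Poly_Mapping.single 1 (aug x)) k =
      Poly_Mapping.lookup (\<Sum>w\<in>Poly_Mapping.keys x. Poly_Mapping.single 1 (Poly_Mapping.lookup x w)) k"
      unfolding lookup_sum by (cases "k = 1") (auto simp: lookup_single aug_def)
  qed
  have "x - Poly_Mapping.single 1 (aug x) = (\<Sum>w\<in>Poly_Mapping.keys x. Poly_Mapping.single w (Poly_Mapping.lookup x w) - Poly_Mapping.single 1 (Poly_Mapping.lookup x w))"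
  proof -
    have D: "(\<Sum>w\<in>Poly_Mapping.keys x. Poly_Mapping.single w (Poly_Mapping.lookup x w)) = x" by (rule decomp[symmetric])
    have "(\<Sum>w\<in>Poly_Mapping.keys x. Poly_Mapping.single w (Poly_Mapping.lookup x w) - Poly_Mapping.single 1 (Poly_Mapping.lookup x w))
      = (\<Sum>w\<in>Poly_Mapping.keys x. Poly_Mapping.single w (Poly_Mapping.lookup x w)) - (\<Sum>w\<in>Poly_Mapping.keys x. Poly_Mapping.single 1 (Poly_Mapping.lookup x w))"
      by (rule sum_subtractf)
    also have "\<dots> = x - Poly_Mapping.single 1 (aug x)" using D e[symmetric] by (rule arg_cong2[where f = minus])
    finally show ?thesis by (rule sym)
  qed
  also have "\<dots> \<in> sumK M1 M2" by (intro sumK_sum s1) auto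
  finally show ?thesis .
qed

lemma aug_diff: "aug (x - y) = aug x - aug y"
  unfolding aug_pr by (rule pr_diff)

lemma tcoset_eq: "tcoset Mj x = tcoset Mj y \<longleftrightarrow> x - y \<in> aug_ker Mj"
proof
  assume eq: "tcoset Mj x = tcoset Mj y"
  have "y \<in> tcoset Mj y" by (simp add: tcoset_def aug_ker.zero)
  then have "y \<in> tcoset Mj x" using eq by simp
  then show "x - y \<in> aug_ker Mj" by (simp add: tcoset_def)
next
  assume h: "x - y \<in> aug_ker Mj"
  have "x - z \<in> aug_ker Mj \<longleftrightarrow> y - z \<in> aug_ker Mj" for z
  proof
    assume "x - z \<in> aug_ker Mj"
    from aug_ker_diff[OF this h] show "y - z \<in> aug_ker Mj" by simp
  next
    assume "y - z \<in> aug_ker Mj"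
    from aug_ker.add[OF h this] show "x - z \<in> aug_ker Mj" by simp
  qed
  then show "tcoset Mj x = tcoset Mj y" by (auto simp: tcoset_def)
qed

lemma tens_i_tcoset:
  assumes "M0 \<subseteq> M1" "M0 \<subseteq> M2"
  shows "tens_i M1 M2 (tcoset M0 z) = (tcoset M1 z, tcoset M2 z)"
proof -
  have "{y. \<exists>x\<in>tcoset M0 z. x - y \<in> aug_ker Mj} = tcoset Mj z" if "M0 \<subseteq> Mj" for Mj
  proof (auto simp: tcoset_def)
    fix x y assume "z - x \<in> aug_ker M0" "x - y \<in> aug_ker Mj"
    from aug_ker.add[OF aug_ker_mono[OF that this(1)] this(2)] show "z - y \<in> aug_ker Mj" by simp
  next
    fix y assume "z - y \<in> aug_ker Mj"
    then show "\<exists>x. z - x \<in> aug_ker M0 \<and> x - y \<in> aug_ker Mj" by (intro exI[of _ z]) (simp add: aug_ker.zero)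
  qed
  then show ?thesis using assms unfolding tens_i_def by simp
qed

lemma tens_p_tcoset: "tens_p (tcoset M1 x, tcoset M2 y) = aug x - aug y"
  unfolding tens_p_def
proof (rule the_equality)
  show "\<exists>x'\<in>fst (tcoset M1 x, tcoset M2 y). \<exists>y'\<in>snd (tcoset M1 x, tcoset M2 y). aug x - aug y = aug x' - aug y'"
    by (intro bexI[of _ x] bexI[of _ y]) (auto simp: tcoset_def aug_ker.zero)
next
  fix n assume "\<exists>x'\<in>fst (tcoset M1 x, tcoset M2 y). \<exists>y'\<in>snd (tcoset M1 x, tcoset M2 y). n = aug x' - aug y'"
  then obtain x' y' where "x - x' \<in> aug_ker M1" "y - y' \<in> aug_ker M2" "n = aug x' - aug y'"
    by (auto simp: tcoset_def)
  then show "n = aug x - aug y" using aug_ker_aug aug_diff by (metis eq_iff_diff_eq_0)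
qed

theorem lemma2p2:
  fixes M0 M1 M2 :: "'a::monoid_mult set"
  assumes "submonoid M0" and "submonoid M1" and "submonoid M2"
    and "M0 \<subseteq> M1 \<inter> M2"
    and "is_free_amalgam M0 M1 M2"
  shows "inj_on (tens_i M1 M2) (tens M0)
    \<and> tens_i M1 M2 ` tens M0 = {b \<in> tens M1 \<times> tens M2. tens_p b = 0}
    \<and> tens_p ` (tens M1 \<times> tens M2) = UNIV"
proof (intro conjI)
  have s1: "M0 \<subseteq> M1" and s2: "M0 \<subseteq> M2" using assms(4) by auto
  note ti = tens_i_tcoset[OF s1 s2]
  show "inj_on (tens_i M1 M2) (tens M0)"
  proof (rule inj_onI)
    fix c c' assume "c \<in> tens M0" "c' \<in> tens M0" and eq: "tens_i M1 M2 c = tens_i M1 M2 c'"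
    then obtain z z' where c: "c = tcoset M0 z" "c' = tcoset M0 z'" unfolding tens_def by auto
    have "z - z' \<in> aug_ker M1" "z - z' \<in> aug_ker M2" using eq unfolding c ti by (simp_all add: tcoset_eq)
    then have "z - z' \<in> aug_ker M0" using ker_inter[OF assms(5)] by blast
    then show "c = c'" unfolding c by (simp add: tcoset_eq)
  qed
  show "tens_i M1 M2 ` tens M0 = {b \<in> tens M1 \<times> tens M2. tens_p b = 0}"
  proof
    show "tens_i M1 M2 ` tens M0 \<subseteq> {b \<in> tens M1 \<times> tens M2. tens_p b = 0}"
      by (auto simp: tens_def ti tens_p_tcoset)
  next
    show "{b \<in> tens M1 \<times> tens M2. tens_p b = 0} \<subseteq> tens_i M1 M2 ` tens M0"
    proof clarify
      fix b1 b2 assume b: "b1 \<in> tens M1" "b2 \<in> tens M2" "tens_p (b1, b2) = 0"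
      then obtain x y where xy: "b1 = tcoset M1 x" "b2 = tcoset M2 y" unfolding tens_def by auto
      then have "aug (x - y) = 0" using b(3) by (simp add: tens_p_tcoset aug_diff)
      then have "x - y \<in> sumK M1 M2" using conn[OF assms(5), of "x - y"] by simp
      then obtain k1 k2 where k: "x - y = k1 + k2" "k1 \<in> aug_ker M1" "k2 \<in> aug_ker M2"
        unfolding sumK_def by auto
      have "tcoset M1 (x - k1) = tcoset M1 x" using aug_ker.neg[OF k(2)] by (simp add: tcoset_eq)
      moreover have "tcoset M2 (x - k1) = tcoset M2 y"
        using k by (simp add: tcoset_eq algebra_simps)
      ultimately have "tens_i M1 M2 (tcoset M0 (x - k1)) = (b1, b2)" by (simp add: ti xy)
      moreover have "tcoset M0 (x - k1) \<in> tens M0" unfolding tens_def by simp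
      ultimately show "(b1, b2) \<in> tens_i M1 M2 ` tens M0" by (rule image_eqI[OF sym])
    qed
  qed
  show "tens_p ` (tens M1 \<times> tens M2) = UNIV"
  proof -
    have "n \<in> tens_p ` (tens M1 \<times> tens M2)" for n
    proof -
      have "tens_p (tcoset M1 (Poly_Mapping.single 1 n), tcoset M2 0) = n"
        by (simp add: tens_p_tcoset aug_pr pr_single pr_zero)
      then show ?thesis unfolding tens_def by (metis SigmaI rangeI rev_image_eqI)
    qed
    then show ?thesis by blast
  qed
qed

end
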